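(* Let $\mu\in P(\mathbb{R})$ be a measure that is not a Dirac measure, and write $N_\mu=(\mathbb{R}\setminus\operatorname{conv}(C_\mu))\cup\bigcup_{j} I_j$, where the $I_j$ are the bounded connected components of $N_\mu$ (a disjoint union; the union of the unbounded components of $N_\mu$ equals $\mathbb{R}\setminus\operatorname{conv}(C_\mu)$). Then $$\{\mu\}^1\setminus\Delta=\{\nu\in P(\mathbb{R})\setminus\Delta : \nu(\mathbb{R}\setminus\operatorname{conv}(C_\mu))=1\}\ \cup\ \bigcup_{j}\{\nu\in P(\mathbb{R})\setminus\Delta : \nu(I_j)=1\}.$$
   Context: $P(\mathbb{R})$ is the set of Borel probability measures on $\mathbb{R}$ with the Kuiper distance $d_{Ku}(\mu,\nu)=\sup\{|\mu(I)-\nu(I)| : I\text{ a non-degenerate interval}\}$. $\Delta$ is the set of Dirac measures $\delta_x$ ($x\in\mathbb{R}$). $\{\mu\}^1=\{\nu\in P(\mathbb{R}) : d_{Ku}(\mu,\nu)=1\}$. $N_\mu$ is the union of all non-degenerate intervals $I$ with $\mu(I)=0$, and $C_\mu=\mathbb{R}\setminus N_\mu$ (the co-interval support). $\operatorname{conv}$ denotes convex hull. *)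

theory Defs
  imports "HOL-Probability.Probability"
begin

definition Prob_R :: "real measure set" where
  "Prob_R = {M. prob_space M \<and> sets M = sets (borel :: real measure)}"

definition Dirac_set :: "real measure set" where
  "Dirac_set = {return borel x | x :: real. True}"

definition nondeg_interval :: "real set \<Rightarrow> bool" where
  "nondeg_interval I \<longleftrightarrow> is_interval I \<and> (\<exists>a b. a \<in> I \<and> b \<in> I \<and> a < b)"

definition d_Ku :: "real measure \<Rightarrow> real measure \<Rightarrow> real" where
  "d_Ku \<mu> \<nu> = (SUP I \<in> {I. nondeg_interval I}. \<bar>measure \<mu> I - measure \<nu> I\<bar>)"

definition unit_sphere_Ku :: "real measure \<Rightarrow> real measure set" where
  "unit_sphere_Ku \<mu> = {\<nu> \<in> Prob_R. d_Ku \<mu> \<nu> = 1}"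

definition N_set :: "real measure \<Rightarrow> real set" where
  "N_set \<mu> = \<Union> {I. nondeg_interval I \<and> measure \<mu> I = 0}"

definition C_set :: "real measure \<Rightarrow> real set" where
  "C_set \<mu> = UNIV - N_set \<mu>"

end

theory Submission
  imports Defs
begin

lemma ProbR_D:
  assumes "M \<in> Prob_R"
  shows "prob_space M" "sets M = sets borel" "space M = UNIV"
  using assms unfolding Prob_R_def by (auto dest: sets_eq_imp_space_eq)

lemma ProbR_interval:
  assumes "M \<in> Prob_R" "is_interval (S::real set)"
  shows "S \<in> sets M"
  using ProbR_D(2)[OF assms(1)] real_interval_borel_measurable[OF assms(2)] by simp

lemma ProbR_le1:
  assumes "M \<in> Prob_R" shows "measure M S \<le> 1"
  using prob_space.prob_le_1[OF ProbR_D(1)[OF assms]] by simp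

lemma ProbR_mono:
  assumes "M \<in> Prob_R" "A \<subseteq> B" "B \<in> sets borel"
  shows "measure M A \<le> measure M B"
proof (cases "A \<in> sets borel")
  case True
  then show ?thesis using assms ProbR_D[OF assms(1)]
    by (intro finite_measure.finite_measure_mono) (auto simp: prob_space_def)
next
  case False
  then have "A \<notin> sets M" using ProbR_D(2)[OF assms(1)] by simp
  then show ?thesis by (simp add: measure_notin_sets)
qed

lemma ProbR_compl:
  assumes "M \<in> Prob_R" "A \<in> sets borel"
  shows "measure M (UNIV - A) = 1 - measure M A"
  using prob_space.prob_compl[OF ProbR_D(1)[OF assms(1)], of A] ProbR_D[OF assms(1)] assms(2)
  by simp

lemma dirac_lemma:
  assumes M: "M \<in> Prob_R" and A: "A \<in> sets borel" "measure M A = 1" "A \<subseteq> {x}"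
  shows "M \<in> Dirac_set"
proof -
  interpret prob_space M using ProbR_D[OF M] by simp
  have "measure M {x} \<ge> 1" using ProbR_mono[OF M A(3)] A by simp
  then have x1: "measure M {x} = 1" using ProbR_le1[OF M] by (meson antisym)
  have "M = return borel x"
  proof (rule measure_eqI)
    show "sets M = sets (return borel x)" using ProbR_D[OF M] by simp
  next
    fix B assume "B \<in> sets M"
    then have B: "B \<in> sets borel" using ProbR_D[OF M] by simp
    show "emeasure M B = emeasure (return borel x) B"
    proof (cases "x \<in> B")
      case True
      then have "measure M B \<ge> 1" using ProbR_mono[OF M, of "{x}" B] B x1 by simp
      then have "measure M B = 1" using ProbR_le1[OF M] by (meson antisym)
      then show ?thesis using True B by (simp add: emeasure_eq_measure)
    next
      case False
      then have "measure M B \<le> measure M (UNIV - {x})" using ProbR_mono[OF M, of B "UNIV - {x}"] by auto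
      also have "\<dots> = 0" using ProbR_compl[OF M, of "{x}"] x1 by simp
      finally have "measure M B = 0" using measure_nonneg[of M B] by linarith
      then show ?thesis using False B by (simp add: emeasure_eq_measure)
    qed
  qed
  then show ?thesis unfolding Dirac_set_def by auto
qed

lemma two_points:
  assumes M: "M \<in> Prob_R" "M \<notin> Dirac_set" and A: "A \<in> sets borel" "measure M A = 1"
  shows "\<exists>a b. a \<in> A \<and> b \<in> A \<and> a < b"
proof -
  have "A \<noteq> {}" using A by auto
  then obtain a where a: "a \<in> A" by auto
  have "\<not> A \<subseteq> {a}" using dirac_lemma[OF M(1) A] M(2) by auto
  then obtain b where "b \<in> A" "b \<noteq> a" by auto
  then show ?thesis using a by (metis linorder_neq_iff)
qed


lemma is_interval_1I:
  "(\<And>a b x. a \<in> S \<Longrightarrow> b \<in> S \<Longrightarrow> a \<le> x \<Longrightarrow> x \<le> b \<Longrightarrow> x \<in> S) \<Longrightarrow> is_interval (S::real set)"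
  unfolding is_interval_1 by blast

lemma is_interval_1D:
  "is_interval (S::real set) \<Longrightarrow> a \<in> S \<Longrightarrow> b \<in> S \<Longrightarrow> a \<le> x \<Longrightarrow> x \<le> b \<Longrightarrow> x \<in> S"
  unfolding is_interval_1 by blast

lemma subsingleton_countable: "(\<forall>x\<in>T. \<forall>y\<in>T. x = y) \<Longrightarrow> countable T"
proof (cases "T = {}")
  case False
  assume h: "\<forall>x\<in>T. \<forall>y\<in>T. x = y"
  then obtain x where "T = {x}" using False by blast
  then show ?thesis by simp
qed simp

lemma ProbR_null:
  assumes M: "M \<in> Prob_R" and "A \<in> sets borel" "measure M A = 0"
  shows "A \<in> null_sets M"
proof -
  interpret prob_space M using ProbR_D[OF M] by simp
  show ?thesis using assms ProbR_D[OF M] by (simp add: emeasure_eq_measure null_sets_def)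
qed

lemma interval_null:
  fixes S :: "real set"
  assumes M: "M \<in> Prob_R" and S: "is_interval S"
    and h: "\<forall>a\<in>S. \<forall>b\<in>S. a \<le> b \<longrightarrow> measure M {a..b} = 0"
  shows "measure M S = 0"
proof -
  define E where "E = (S \<inter> \<rat>) \<union> {x\<in>S. \<forall>y\<in>S. x \<le> y} \<union> {x\<in>S. \<forall>y\<in>S. y \<le> x}"
  have cE: "countable E" unfolding E_def
  proof (intro countable_Un)
    show "countable (S \<inter> \<rat>)" by (rule countable_subset[OF _ countable_rat]) auto
  qed (intro subsingleton_countable; force)+
  have cover: "S \<subseteq> (\<Union>p\<in>E\<times>E. {fst p..snd p})"
  proof
    fix x assume x: "x \<in> S"
    obtain a where a: "a \<in> E" "a \<le> x"
    proof (cases "\<exists>y\<in>S. y < x")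
      case True
      then obtain y where y: "y \<in> S" "y < x" by auto
      then obtain q where q: "q \<in> \<rat>" "y < q" "q < x" using Rats_dense_in_real by blast
      then have "q \<in> S" using S x y unfolding is_interval_1 by (meson less_imp_le)
      then show ?thesis using that[of q] q unfolding E_def by auto
    next
      case False
      then show ?thesis using that x unfolding E_def by (auto simp: not_less)
    qed
    obtain b where b: "b \<in> E" "x \<le> b"
    proof (cases "\<exists>y\<in>S. x < y")
      case True
      then obtain y where y: "y \<in> S" "x < y" by auto
      then obtain q where q: "q \<in> \<rat>" "x < q" "q < y" using Rats_dense_in_real by blast
      then have "q \<in> S" using S x y unfolding is_interval_1 by (meson less_imp_le)
      then show ?thesis using that[of q] q unfolding E_def by auto
    next
      case False
      then show ?thesis using that x unfolding E_def by (auto simp: not_less)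
    qed
    show "x \<in> (\<Union>p\<in>E\<times>E. {fst p..snd p})" using a b by force
  qed
  have ES: "E \<subseteq> S" unfolding E_def by auto
  have "(\<Union>p\<in>E\<times>E. {fst p..snd p}) \<in> null_sets M"
  proof (rule null_sets_UN')
    show "countable (E \<times> E)" using cE by simp
  next
    fix p assume p: "p \<in> E \<times> E"
    show "{fst p..snd p} \<in> null_sets M"
    proof (cases "fst p \<le> snd p")
      case True
      then show ?thesis using h p ES by (intro ProbR_null[OF M]) (auto simp: subset_iff)
    next
      case False
      then show ?thesis by simp
    qed
  qed
  then have "S \<in> null_sets M"
    using null_sets_subset cover ProbR_interval[OF M S] by blast
  then show ?thesis by (simp add: measure_def null_setsD1)
qed


lemma N_cover:
  assumes M: "M \<in> Prob_R"
  shows "\<exists>Z. Z \<in> null_sets M \<and> N_set M \<subseteq> Z"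
proof -
  define A where "A q = {x. x \<le> q \<and> measure M {x..q} = 0}" for q :: real
  define B where "B q = {x. q \<le> x \<and> measure M {q..x} = 0}" for q :: real
  have Aint: "is_interval (A q)" for q
  proof (rule is_interval_1I)
    fix a b x assume "a \<in> A q" "b \<in> A q" "a \<le> x" "x \<le> b"
    then show "x \<in> A q" unfolding A_def
      using ProbR_mono[OF M, of "{x..q}" "{a..q}"] measure_nonneg[of M "{x..q}"] by auto
  qed
  have Bint: "is_interval (B q)" for q
  proof (rule is_interval_1I)
    fix a b x assume "a \<in> B q" "b \<in> B q" "a \<le> x" "x \<le> b"
    then show "x \<in> B q" unfolding B_def
      using ProbR_mono[OF M, of "{q..x}" "{q..b}"] measure_nonneg[of M "{q..x}"] by auto
  qed
  have A0: "measure M (A q) = 0" for q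
  proof (rule interval_null[OF M Aint], intro ballI impI)
    fix a b assume "a \<in> A q" "b \<in> A q" "a \<le> b"
    then show "measure M {a..b} = 0" unfolding A_def
      using ProbR_mono[OF M, of "{a..b}" "{a..q}"] measure_nonneg[of M "{a..b}"] by auto
  qed
  have B0: "measure M (B q) = 0" for q
  proof (rule interval_null[OF M Bint], intro ballI impI)
    fix a b assume "a \<in> B q" "b \<in> B q" "a \<le> b"
    then show "measure M {a..b} = 0" unfolding B_def
      using ProbR_mono[OF M, of "{a..b}" "{q..b}"] measure_nonneg[of M "{a..b}"] by auto
  qed
  define Z where "Z = (\<Union>q\<in>\<rat>. A q \<union> B q)"
  have "Z \<in> null_sets M" unfolding Z_def
  proof (rule null_sets_UN'[OF countable_rat])
    fix q :: real
    show "A q \<union> B q \<in> null_sets M"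
      using ProbR_null[OF M] A0 B0 real_interval_borel_measurable Aint Bint by blast
  qed
  moreover have "N_set M \<subseteq> Z"
  proof
    fix x assume "x \<in> N_set M"
    then obtain I where I: "nondeg_interval I" "measure M I = 0" "x \<in> I"
      unfolding N_set_def by auto
    then obtain a b where ab: "a \<in> I" "b \<in> I" "a < b" unfolding nondeg_interval_def by auto
    obtain y where y: "y \<in> I" "y \<noteq> x" using ab by (metis less_irrefl)
    have Ii: "is_interval I" "I \<in> sets borel" using I real_interval_borel_measurable
      unfolding nondeg_interval_def by auto
    show "x \<in> Z"
    proof (cases "x < y")
      case True
      then obtain q where q: "q \<in> \<rat>" "x < q" "q < y" using Rats_dense_in_real by blast
      have "{x..q} \<subseteq> I" using is_interval_1D[OF Ii(1) I(3) y(1)] q by auto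
      then have "measure M {x..q} = 0"
        using ProbR_mono[OF M _ Ii(2)] I(2) measure_nonneg[of M "{x..q}"] by (metis antisym)
      then have "x \<in> A q" using q unfolding A_def by auto
      then show ?thesis using q unfolding Z_def by auto
    next
      case False
      then have "y < x" using y by auto
      then obtain q where q: "q \<in> \<rat>" "y < q" "q < x" using Rats_dense_in_real by blast
      have "{q..x} \<subseteq> I" using is_interval_1D[OF Ii(1) y(1) I(3)] q by auto
      then have "measure M {q..x} = 0"
        using ProbR_mono[OF M _ Ii(2)] I(2) measure_nonneg[of M "{q..x}"] by (metis antisym)
      then have "x \<in> B q" using q unfolding B_def by auto
      then show ?thesis using q unfolding Z_def by auto
    qed
  qed
  ultimately show ?thesis by blast
qed

lemma N_null_sub:
  assumes M: "M \<in> Prob_R" and S: "S \<subseteq> N_set M" "S \<in> sets borel"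
  shows "measure M S = 0"
proof -
  obtain Z where Z: "Z \<in> null_sets M" "N_set M \<subseteq> Z" using N_cover[OF M] by blast
  have "S \<in> null_sets M" using null_sets_subset[OF Z(1)] S Z(2) ProbR_D[OF M] by auto
  then show ?thesis by (simp add: measure_def null_setsD1)
qed

lemma C_big:
  assumes M: "M \<in> Prob_R"
  shows "\<exists>Z. Z \<in> sets borel \<and> UNIV - Z \<subseteq> C_set M \<and> measure M (UNIV - Z) = 1"
proof -
  obtain Z where Z: "Z \<in> null_sets M" "N_set M \<subseteq> Z" using N_cover[OF M] by blast
  have Zs: "Z \<in> sets borel" using Z(1) ProbR_D[OF M] null_setsD2 by blast
  have "measure M Z = 0" using Z(1) by (simp add: measure_def null_setsD1)
  then have "measure M (UNIV - Z) = 1" using ProbR_compl[OF M Zs] by simp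
  moreover have "UNIV - Z \<subseteq> C_set M" using Z(2) unfolding C_set_def by auto
  ultimately show ?thesis using Zs by blast
qed

lemma C_pos:
  assumes M: "M \<in> Prob_R" and c: "c \<in> C_set M"
  shows "measure M {..c} > 0" "measure M {c..} > 0"
proof -
  have "nondeg_interval {..c}" unfolding nondeg_interval_def
    using is_interval_ic[of c] by (intro conjI exI[of _ "c - 1"] exI[of _ c]) auto
  then have "measure M {..c} \<noteq> 0" using c unfolding C_set_def N_set_def by auto
  then show "measure M {..c} > 0" using measure_nonneg[of M "{..c}"] by linarith
  have "nondeg_interval {c..}" unfolding nondeg_interval_def
    using is_interval_ci[of c] by (intro conjI exI[of _ c] exI[of _ "c + 1"]) auto
  then have "measure M {c..} \<noteq> 0" using c unfolding C_set_def N_set_def by auto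
  then show "measure M {c..} > 0" using measure_nonneg[of M "{c..}"] by linarith
qed

lemma C_two:
  assumes M: "M \<in> Prob_R" "M \<notin> Dirac_set"
  shows "\<exists>a b. a \<in> C_set M \<and> b \<in> C_set M \<and> a < b"
proof -
  obtain Z where Z: "Z \<in> sets borel" "UNIV - Z \<subseteq> C_set M" "measure M (UNIV - Z) = 1"
    using C_big[OF M(1)] by blast
  have "UNIV - Z \<in> sets borel" using Z(1) by auto
  then obtain a b where "a \<in> UNIV - Z" "b \<in> UNIV - Z" "a < b" using two_points[OF M _ Z(3)] by blast
  then show ?thesis using Z(2) by blast
qed

lemma hull_char:
  fixes C :: "real set"
  assumes "x \<in> convex hull C"
  shows "\<exists>c1\<in>C. \<exists>c2\<in>C. c1 \<le> x \<and> x \<le> c2"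
proof -
  let ?T = "{x. \<exists>c1\<in>C. \<exists>c2\<in>C. c1 \<le> x \<and> x \<le> c2}"
  have "is_interval ?T"
  proof (rule is_interval_1I)
    fix a b x
    assume h: "a \<in> ?T" "b \<in> ?T" "a \<le> x" "x \<le> b"
    from h(1) obtain c1 where c1: "c1 \<in> C" "c1 \<le> a" by auto
    from h(2) obtain c2 where c2: "c2 \<in> C" "b \<le> c2" by auto
    have "c1 \<le> x" "x \<le> c2" using c1 c2 h by linarith+
    then show "x \<in> ?T" using c1 c2 by blast
  qed
  then have "convex ?T" by (simp add: is_interval_convex_1)
  moreover have "C \<subseteq> ?T" by auto
  ultimately have "convex hull C \<subseteq> ?T" by (rule hull_minimal[rotated])
  then show ?thesis using assms by auto
qed

lemma K_props:
  assumes M: "M \<in> Prob_R"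
  shows "is_interval (convex hull (C_set M))" "convex hull (C_set M) \<in> sets borel"
    "measure M (convex hull (C_set M)) = 1"
proof -
  show i: "is_interval (convex hull (C_set M))" unfolding is_interval_convex_1 by (rule convex_convex_hull)
  then show s: "convex hull (C_set M) \<in> sets borel" by (rule real_interval_borel_measurable)
  obtain Z where Z: "Z \<in> sets borel" "UNIV - Z \<subseteq> C_set M" "measure M (UNIV - Z) = 1"
    using C_big[OF M(1)] by blast
  have sub: "UNIV - Z \<subseteq> convex hull (C_set M)" using Z(2) hull_subset[of "C_set M" convex] by (rule subset_trans)
  have "measure M (convex hull (C_set M)) \<ge> 1" using ProbR_mono[OF M sub s] Z(3) by simp
  then show "measure M (convex hull (C_set M)) = 1" using ProbR_le1[OF M] by (meson antisym)
qed


lemma nondeg_sets: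
  assumes "M \<in> Prob_R" "nondeg_interval I"
  shows "I \<in> sets M" "I \<in> sets borel" "is_interval I"
  using assms ProbR_interval real_interval_borel_measurable unfolding nondeg_interval_def by auto

lemma dist_le1:
  assumes "M \<in> Prob_R" "N \<in> Prob_R"
  shows "\<bar>measure M I - measure N I\<bar> \<le> 1"
  using ProbR_le1[OF assms(1), of I] ProbR_le1[OF assms(2), of I]
    measure_nonneg[of M I] measure_nonneg[of N I] by linarith

lemma dKu_one:
  assumes "M \<in> Prob_R" "N \<in> Prob_R" "nondeg_interval I" "\<bar>measure M I - measure N I\<bar> = 1"
  shows "d_Ku M N = 1"
  unfolding d_Ku_def
proof (rule cSup_eq_maximum)
  show "1 \<in> (\<lambda>I. \<bar>measure M I - measure N I\<bar>) ` {I. nondeg_interval I}"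
    using assms(3,4) by (intro rev_image_eqI[of I]) auto
next
  fix y assume "y \<in> (\<lambda>I. \<bar>measure M I - measure N I\<bar>) ` {I. nondeg_interval I}"
  then show "y \<le> 1" using dist_le1[OF assms(1,2)] by auto
qed

lemma nondeg_01: "nondeg_interval {0..(1::real)}"
  unfolding nondeg_interval_def by (intro conjI exI[of _ 0] exI[of _ 1]) auto

lemma dKu_cases:
  assumes M: "M \<in> Prob_R" and N: "N \<in> Prob_R" and d: "d_Ku M N = 1"
  shows "(\<forall>e>0. \<exists>I. nondeg_interval I \<and> measure N I > 1 - e \<and> measure M I < e) \<or>
         (\<forall>e>0. \<exists>I. nondeg_interval I \<and> measure M I > 1 - e \<and> measure N I < e)"
proof (rule ccontr)
  assume "\<not> ?thesis"
  then obtain e1 e2 where e1: "e1 > 0" "\<forall>I. nondeg_interval I \<longrightarrow> \<not> (measure N I > 1 - e1 \<and> measure M I < e1)"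
    and e2: "e2 > 0" "\<forall>I. nondeg_interval I \<longrightarrow> \<not> (measure M I > 1 - e2 \<and> measure N I < e2)"
    by (auto simp: not_less)
  define e where "e = min e1 e2"
  have e: "e > 0" "e \<le> e1" "e \<le> e2" using e1 e2 unfolding e_def by auto
  have bnd: "\<bar>measure M I - measure N I\<bar> \<le> 1 - e" if I: "nondeg_interval I" for I
  proof -
    have a: "measure M I \<ge> 0" "measure N I \<ge> 0" "measure M I \<le> 1" "measure N I \<le> 1"
      using ProbR_le1[OF M, of I] ProbR_le1[OF N, of I] by auto
    have "\<not> (measure N I > 1 - e1 \<and> measure M I < e1)" using e1 I by auto
    moreover have "\<not> (measure M I > 1 - e2 \<and> measure N I < e2)" using e2 I by auto
    ultimately show ?thesis using a e by linarith
  qed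
  have "d_Ku M N \<le> 1 - e" unfolding d_Ku_def
    by (rule cSUP_least) (use nondeg_01 bnd in auto)
  then show False using d e by simp
qed

lemma out_interval:
  assumes M: "M \<in> Prob_R" and I: "is_interval I" "c \<notin> I"
  shows "measure M I \<le> 1 - min (measure M {..c}) (measure M {c..})"
proof -
  have "(\<forall>y\<in>I. c < y) \<or> (\<forall>y\<in>I. y < c)"
  proof (rule ccontr)
    assume "\<not> ?thesis"
    then obtain y z where "y \<in> I" "z \<in> I" "y \<le> c" "c \<le> z" by (auto simp: not_less)
    then show False using is_interval_1D[OF I(1)] I(2) by blast
  qed
  then show ?thesis
  proof
    assume "\<forall>y\<in>I. c < y"
    then have "I \<subseteq> UNIV - {..c}" by auto
    then have "measure M I \<le> 1 - measure M {..c}"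
      using ProbR_mono[OF M, of I "UNIV - {..c}"] ProbR_compl[OF M, of "{..c}"] by auto
    then show ?thesis by linarith
  next
    assume "\<forall>y\<in>I. y < c"
    then have "I \<subseteq> UNIV - {c..}" by auto
    then have "measure M I \<le> 1 - measure M {c..}"
      using ProbR_mono[OF M, of I "UNIV - {c..}"] ProbR_compl[OF M, of "{c..}"] by auto
    then show ?thesis by linarith
  qed
qed

lemma keyB:
  assumes M: "M \<in> Prob_R" and N: "N \<in> Prob_R"
    and B: "\<forall>e>0. \<exists>I. nondeg_interval I \<and> measure M I > 1 - e \<and> measure N I < e"
    and c: "c1 \<in> C_set M" "c2 \<in> C_set M"
  shows "measure N {c1..c2} = 0"
proof -
  define d where "d = min (min (measure M {..c1}) (measure M {c1..})) (min (measure M {..c2}) (measure M {c2..}))"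
  have d: "d > 0" unfolding d_def using C_pos[OF M c(1)] C_pos[OF M c(2)] by auto
  have dle: "d \<le> min (measure M {..c1}) (measure M {c1..})" "d \<le> min (measure M {..c2}) (measure M {c2..})"
    unfolding d_def by auto
  have small: "measure N {c1..c2} < e" if e: "e > 0" for e
  proof -
    have ed: "min e d > 0" "min e d \<le> d" "min e d \<le> e" using e d by auto
    obtain I where I: "nondeg_interval I" "measure M I > 1 - min e d" "measure N I < min e d"
      using B ed(1) by blast
    have Ii: "is_interval I" "I \<in> sets borel" using nondeg_sets[OF M I(1)] by auto
    have c1I: "c1 \<in> I"
    proof (rule ccontr)
      assume "c1 \<notin> I"
      from out_interval[OF M Ii(1) this] I(2) dle(1) ed(2) show False by linarith
    qed
    have c2I: "c2 \<in> I"
    proof (rule ccontr)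
      assume "c2 \<notin> I"
      from out_interval[OF M Ii(1) this] I(2) dle(2) ed(2) show False by linarith
    qed
    have "{c1..c2} \<subseteq> I"
    proof
      fix z assume "z \<in> {c1..c2}"
      then show "z \<in> I" using is_interval_1D[OF Ii(1) c1I c2I] by auto
    qed
    then have "measure N {c1..c2} \<le> measure N I" using ProbR_mono[OF N _ Ii(2)] by simp
    then show ?thesis using I(3) ed(3) by linarith
  qed
  show ?thesis
  proof (rule ccontr)
    assume "measure N {c1..c2} \<noteq> 0"
    then have "measure N {c1..c2} > 0" using measure_nonneg[of N "{c1..c2}"] by linarith
    from small[OF this] show False by simp
  qed
qed

lemma unbounded_comp:
  assumes "Comp \<in> components (N_set M)" "\<not> bounded Comp"
  shows "Comp \<inter> convex hull (C_set M) = {}"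
proof (rule ccontr)
  assume "Comp \<inter> convex hull (C_set M) \<noteq> {}"
  then obtain x where x: "x \<in> Comp" "x \<in> convex hull (C_set M)" by auto
  obtain c1 c2 where c: "c1 \<in> C_set M" "c2 \<in> C_set M" "c1 \<le> x" "x \<le> c2"
    using hull_char[OF x(2)] by blast
  have ci: "is_interval Comp" using in_components_connected[OF assms(1)] is_interval_connected_1 by blast
  have sub: "Comp \<subseteq> N_set M" using in_components_subset[OF assms(1)] .
  have "\<not> Comp \<subseteq> {c1..c2}" using assms(2) by (metis bounded_closed_interval bounded_subset)
  then obtain y where y: "y \<in> Comp" "y \<notin> {c1..c2}" by blast
  show False
  proof (cases "y < c1")
    case True
    then have "c1 \<in> Comp" using is_interval_1D[OF ci y(1) x(1)] c by auto
    then show False using sub c(1) unfolding C_set_def by auto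
  next
    case False
    then have "c2 < y" using y by auto
    then have "c2 \<in> Comp" using is_interval_1D[OF ci x(1) y(1)] c by auto
    then show False using sub c(2) unfolding C_set_def by auto
  qed
qed


lemma half_pow_small:
  assumes "t > (0::real)"
  shows "\<exists>n. (1/2::real) ^ n < t"
  using real_arch_pow_inv[OF assms, of "1/2"] by simp

lemma caseA_J:
  assumes M: "M \<in> Prob_R" and N: "N \<in> Prob_R"
    and A: "\<forall>e>0. \<exists>I. nondeg_interval I \<and> measure N I > 1 - e \<and> measure M I < e"
  shows "\<exists>J. is_interval J \<and> measure M J = 0 \<and> measure N J = 1"
proof -
  have "\<forall>n::nat. \<exists>I. nondeg_interval I \<and> measure N I > 1 - (1/2)^n \<and> measure M I < (1/2)^n"
    using A by simp
  then obtain I where I: "\<And>n. nondeg_interval (I n)" "\<And>n. measure N (I n) > 1 - (1/2)^n"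
    "\<And>n. measure M (I n) < (1/2)^n" by metis
  have Ii: "\<And>n. is_interval (I n)" "\<And>n. I n \<in> sets borel"
    using nondeg_sets[OF M I(1)] by auto
  define T where "T m = (\<Inter>n\<in>{m..}. I n)" for m
  define J where "J = (\<Union>m. T m)"
  have Tint: "is_interval (T m)" for m
  proof (rule is_interval_1I)
    fix a b x assume "a \<in> T m" "b \<in> T m" "a \<le> x" "x \<le> b"
    then show "x \<in> T m" unfolding T_def using is_interval_1D[OF Ii(1)] by blast
  qed
  have Ts: "T m \<in> sets borel" for m using Tint real_interval_borel_measurable by blast
  have Tmono: "T m \<subseteq> T m'" if "m \<le> m'" for m m' unfolding T_def using that by auto
  have Jint: "is_interval J"
  proof (rule is_interval_1I)
    fix a b x assume h: "a \<in> J" "b \<in> J" "a \<le> x" "x \<le> b"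
    then obtain m1 m2 where "a \<in> T m1" "b \<in> T m2" unfolding J_def by auto
    then have "a \<in> T (max m1 m2)" "b \<in> T (max m1 m2)" using Tmono[of m1 "max m1 m2"] Tmono[of m2 "max m1 m2"] by auto
    then have "x \<in> T (max m1 m2)" using is_interval_1D[OF Tint] h(3,4) by blast
    then show "x \<in> J" unfolding J_def by auto
  qed
  have T0: "measure M (T m) = 0" for m
  proof (rule ccontr)
    assume "measure M (T m) \<noteq> 0"
    then have "measure M (T m) > 0" using measure_nonneg[of M "T m"] by linarith
    then obtain n where n: "(1/2::real)^n < measure M (T m)" using half_pow_small by blast
    define n' where "n' = max n m"
    have "(1/2::real)^n' \<le> (1/2)^n" unfolding n'_def by (intro power_decreasing) auto
    moreover have "T m \<subseteq> I n'" unfolding T_def n'_def by auto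
    then have "measure M (T m) \<le> measure M (I n')" using ProbR_mono[OF M _ Ii(2)] by blast
    ultimately show False using I(3)[of n'] n by linarith
  qed
  have "J \<in> null_sets M" unfolding J_def
    using ProbR_null[OF M Ts T0] by (intro null_sets_UN) auto
  then have J0: "measure M J = 0" by (simp add: measure_def null_setsD1)
  have Js: "J \<in> sets borel" using Jint real_interval_borel_measurable by blast
  interpret N: prob_space N using ProbR_D[OF N] by simp
  have cI: "measure N (UNIV - I n) < (1/2)^n" for n
    using ProbR_compl[OF N Ii(2)] I(2)[of n] by simp
  have bound: "1 - measure N J \<le> 2 * (1/2)^m" for m
  proof -
    have "UNIV - T m = (\<Union>k. UNIV - I (k + m))" unfolding T_def
      by (auto, metis add.commute le_add_diff_inverse2)
    have summ: "summable (\<lambda>k. (1/2::real)^(k+m))"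
      by (simp add: power_add summable_mult2)
    have summ2: "summable (\<lambda>k. measure N (UNIV - I (k + m)))"
      by (rule summable_comparison_test'[OF summ, of 0]) (use cI in \<open>auto intro: less_imp_le\<close>)
    have "1 - measure N J = measure N (UNIV - J)" using ProbR_compl[OF N Js] by simp
    also have "\<dots> \<le> measure N (UNIV - T m)"
      by (rule ProbR_mono[OF N]) (use Ts in \<open>auto simp: J_def\<close>)
    also have "\<dots> = measure N (\<Union>k. UNIV - I (k + m))" using \<open>UNIV - T m = _\<close> by simp
    also have "\<dots> \<le> (\<Sum>k. measure N (UNIV - I (k + m)))"
      by (rule N.finite_measure_subadditive_countably[OF _ summ2]) (use Ii(2) ProbR_D[OF N] in auto)
    also have "\<dots> \<le> (\<Sum>k. (1/2::real)^(k+m))"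
      by (rule suminf_le[OF _ summ2 summ]) (use cI in \<open>auto intro: less_imp_le\<close>)
    also have "\<dots> = 2 * (1/2)^m"
    proof -
      have "(\<lambda>k. (1/2::real)^(k+m)) = (\<lambda>k. (1/2)^k * (1/2)^m)" by (simp add: power_add)
      moreover have "(\<Sum>k. (1/2::real)^k * (1/2)^m) = (\<Sum>k. (1/2::real)^k) * (1/2)^m"
        by (rule suminf_mult2[symmetric]) (simp add: summable_geometric)
      moreover have "(\<Sum>k. (1/2::real)^k) = 2" using suminf_geometric[of "1/2::real"] by simp
      ultimately show ?thesis by simp
    qed
    finally show ?thesis .
  qed
  have J1: "measure N J = 1"
  proof (rule ccontr)
    assume "measure N J \<noteq> 1"
    then have "measure N J < 1" using ProbR_le1[OF N, of J] by linarith
    then have "(1 - measure N J) / 2 > 0" by simp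
    then obtain m where "(1/2::real)^m < (1 - measure N J) / 2" using half_pow_small by blast
    then show False using bound[of m] by (simp add: field_simps)
  qed
  show ?thesis using Jint J0 J1 by blast
qed


theorem lemma3p3:
  assumes "\<mu> \<in> Prob_R" and "\<mu> \<notin> Dirac_set"
  shows "unit_sphere_Ku \<mu> - Dirac_set =
      {\<nu> \<in> Prob_R - Dirac_set. measure \<nu> (UNIV - convex hull (C_set \<mu>)) = 1}
      \<union> (\<Union>I \<in> {J \<in> components (N_set \<mu>). bounded J}.
            {\<nu> \<in> Prob_R - Dirac_set. measure \<nu> I = 1})"
proof (rule set_eqI, rule iffI)
  let ?K = "convex hull (C_set \<mu>)"
  have M: "\<mu> \<in> Prob_R" by (rule assms(1))
  note K = K_props[OF M]
  fix \<nu>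
  assume "\<nu> \<in> unit_sphere_Ku \<mu> - Dirac_set"
  then have N: "\<nu> \<in> Prob_R" and nD: "\<nu> \<notin> Dirac_set" and d: "d_Ku \<mu> \<nu> = 1"
    unfolding unit_sphere_Ku_def by auto
  from dKu_cases[OF M N d]
  show "\<nu> \<in> {\<nu> \<in> Prob_R - Dirac_set. measure \<nu> (UNIV - ?K) = 1}
      \<union> (\<Union>I \<in> {J \<in> components (N_set \<mu>). bounded J}. {\<nu> \<in> Prob_R - Dirac_set. measure \<nu> I = 1})"
  proof
    assume A: "\<forall>e>0. \<exists>I. nondeg_interval I \<and> measure \<nu> I > 1 - e \<and> measure \<mu> I < e"
    obtain J where J: "is_interval J" "measure \<mu> J = 0" "measure \<nu> J = 1"
      using caseA_J[OF M N A] by blast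
    have Js: "J \<in> sets borel" using J(1) real_interval_borel_measurable by blast
    obtain a b where ab: "a \<in> J" "b \<in> J" "a < b" using two_points[OF N nD Js J(3)] by blast
    have "nondeg_interval J" unfolding nondeg_interval_def using J(1) ab by blast
    then have JN: "J \<subseteq> N_set \<mu>" unfolding N_set_def using J(2) by blast
    have Jc: "connected J" using J(1) is_interval_connected_1 by blast
    obtain Comp where Comp: "Comp \<in> components (N_set \<mu>)" "J \<subseteq> Comp"
      using exists_component_superset[OF JN _ Jc] ab JN by blast
    have Ci: "is_interval Comp" using in_components_connected[OF Comp(1)] is_interval_connected_1 by blast
    have Cs: "Comp \<in> sets borel" using Ci real_interval_borel_measurable by blast
    show ?thesis
    proof (cases "bounded Comp")
      case True
      have "measure \<nu> Comp \<ge> 1" using ProbR_mono[OF N Comp(2) Cs] J(3) by simp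
      then have "measure \<nu> Comp = 1" using ProbR_le1[OF N, of Comp] by linarith
      then show ?thesis using Comp True N nD by blast
    next
      case False
      have "Comp \<subseteq> UNIV - ?K" using unbounded_comp[OF Comp(1) False] by blast
      then have "J \<subseteq> UNIV - ?K" using Comp(2) by blast
      then have "measure \<nu> (UNIV - ?K) \<ge> 1" using ProbR_mono[OF N _ ] K(2) J(3) by (metis sets.compl_sets space_borel)
      then have "measure \<nu> (UNIV - ?K) = 1" using ProbR_le1[OF N, of "UNIV - ?K"] by linarith
      then show ?thesis using N nD by blast
    qed
  next
    assume B: "\<forall>e>0. \<exists>I. nondeg_interval I \<and> measure \<mu> I > 1 - e \<and> measure \<nu> I < e"
    have "measure \<nu> ?K = 0"
    proof (rule interval_null[OF N K(1)], intro ballI impI)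
      fix a b assume ab: "a \<in> ?K" "b \<in> ?K" "a \<le> b"
      obtain c1 where c1: "c1 \<in> C_set \<mu>" "c1 \<le> a" using hull_char[OF ab(1)] by blast
      obtain c2 where c2: "c2 \<in> C_set \<mu>" "b \<le> c2" using hull_char[OF ab(2)] by blast
      have "{a..b} \<subseteq> {c1..c2}" using c1 c2 by auto
      then have "measure \<nu> {a..b} \<le> measure \<nu> {c1..c2}" using ProbR_mono[OF N] by simp
      then show "measure \<nu> {a..b} = 0" using keyB[OF M N B c1(1) c2(1)] measure_nonneg[of \<nu> "{a..b}"]
        by linarith
    qed
    then have "measure \<nu> (UNIV - ?K) = 1" using ProbR_compl[OF N K(2)] by simp
    then show ?thesis using N nD by blast
  qed
next
  let ?K = "convex hull (C_set \<mu>)"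
  have M: "\<mu> \<in> Prob_R" by (rule assms(1))
  note K = K_props[OF M]
  fix \<nu>
  assume h: "\<nu> \<in> {\<nu> \<in> Prob_R - Dirac_set. measure \<nu> (UNIV - ?K) = 1}
      \<union> (\<Union>I \<in> {J \<in> components (N_set \<mu>). bounded J}. {\<nu> \<in> Prob_R - Dirac_set. measure \<nu> I = 1})"
  then have N: "\<nu> \<in> Prob_R" and nD: "\<nu> \<notin> Dirac_set" by auto
  have "d_Ku \<mu> \<nu> = 1"
  proof (cases "measure \<nu> (UNIV - ?K) = 1")
    case True
    then have nK: "measure \<nu> ?K = 0" using ProbR_compl[OF N K(2)] by simp
    obtain c1 c2 where c: "c1 \<in> C_set \<mu>" "c2 \<in> C_set \<mu>" "c1 < c2" using C_two[OF M assms(2)] by blast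
    have "nondeg_interval ?K" unfolding nondeg_interval_def
      using K(1) c hull_subset[of "C_set \<mu>" convex] by blast
    then show ?thesis using dKu_one[OF M N] K(3) nK by fastforce
  next
    case False
    then obtain Comp where Comp: "Comp \<in> components (N_set \<mu>)" "measure \<nu> Comp = 1" using h by auto
    have Ci: "is_interval Comp" using in_components_connected[OF Comp(1)] is_interval_connected_1 by blast
    have Cs: "Comp \<in> sets borel" using Ci real_interval_borel_measurable by blast
    have "measure \<mu> Comp = 0" using N_null_sub[OF M in_components_subset[OF Comp(1)] Cs] .
    moreover obtain a b where ab: "a \<in> Comp" "b \<in> Comp" "a < b" using two_points[OF N nD Cs Comp(2)] by blast
    then have "nondeg_interval Comp" unfolding nondeg_interval_def using Ci by blast
    ultimately show ?thesis using dKu_one[OF M N] Comp(2) by fastforce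
  qed
  then show "\<nu> \<in> unit_sphere_Ku \<mu> - Dirac_set" unfolding unit_sphere_Ku_def using N nD by blast
qed

end
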